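(* If $\mathcal{T}$ is a single-elimination tournament with at least $2$ players and $N$ total brackets, then for every scoring system $\sigma$ we have $\mathrm{res}(\mathcal{T},\sigma)>\tfrac14 N$.
   Context: A single-elimination tournament is a finite directed graph $\mathcal{T}$ such that: (a) $\mathcal{T}$ has exactly one sink (vertex with no out-neighbours); (b) every non-sink vertex has exactly one out-neighbour; (c) $\mathcal{T}$ has no directed cycles; (d) $|N^-(v)|\ne 1$ for every vertex $v$, where $N^-(v)$ denotes the set of in-neighbours of $v$. The players $P(\mathcal{T})$ are the sources and the matches are $M(\mathcal{T})=V(\mathcal{T})\setminus P(\mathcal{T})$. A bracket is a function $B:V(\mathcal{T})\to P(\mathcal{T})$ with $B(a)=a$ for every player $a$ and $B(x)\in\{B(u):u\in N^-(x)\}$ for every match $x$. A scoring system is any function $\sigma:M(\mathcal{T})\to\mathbb{R}_{>0}$. For brackets $B,B'$ let $\mathrm{score}_\sigma(B,B')=\sum_{x\in M(\mathcal{T}):\,B(x)=B'(x)}\sigma(x)$. A set of brackets $\mathcal{B}$ is $\sigma$-resolving if for every pair of distinct brackets $B\ne B'$ there is $B_i\in\mathcal{B}$ with $\mathrm{score}_\sigma(B_i,B)\ne\mathrm{score}_\sigma(B_i,B')$. $\mathrm{res}(\mathcal{T},\sigma)$ is the minimum $r$ such that every set of $r$ brackets is $\sigma$-resolving. *)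

theory Defs
  imports Complex_Main
begin

definition out_nbrs :: "('v \<times> 'v) set \<Rightarrow> 'v \<Rightarrow> 'v set" where
  "out_nbrs E v = {w. (v, w) \<in> E}"

definition in_nbrs :: "('v \<times> 'v) set \<Rightarrow> 'v \<Rightarrow> 'v set" where
  "in_nbrs E v = {u. (u, v) \<in> E}"

definition is_sink :: "'v set \<Rightarrow> ('v \<times> 'v) set \<Rightarrow> 'v \<Rightarrow> bool" where
  "is_sink V E v \<longleftrightarrow> v \<in> V \<and> out_nbrs E v = {}"

definition single_elim_tournament :: "'v set \<Rightarrow> ('v \<times> 'v) set \<Rightarrow> bool" where
  "single_elim_tournament V E \<longleftrightarrow>
     finite V \<and> E \<subseteq> V \<times> V \<and>
     (\<exists>!v. is_sink V E v) \<and>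
     (\<forall>v\<in>V. \<not> is_sink V E v \<longrightarrow> card (out_nbrs E v) = 1) \<and>
     acyclic E \<and>
     (\<forall>v\<in>V. card (in_nbrs E v) \<noteq> 1)"

definition players :: "'v set \<Rightarrow> ('v \<times> 'v) set \<Rightarrow> 'v set" where
  "players V E = {v \<in> V. in_nbrs E v = {}}"

definition matches :: "'v set \<Rightarrow> ('v \<times> 'v) set \<Rightarrow> 'v set" where
  "matches V E = V - players V E"

text \<open>A bracket is a function V \<rightarrow> players; outside V it is fixed to undefined
 so that brackets correspond exactly to functions on V.\<close>
definition bracket :: "'v set \<Rightarrow> ('v \<times> 'v) set \<Rightarrow> ('v \<Rightarrow> 'v) \<Rightarrow> bool" where
  "bracket V E B \<longleftrightarrow>
     (\<forall>x. x \<notin> V \<longrightarrow> B x = undefined) \<and>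
     (\<forall>x\<in>V. B x \<in> players V E) \<and>
     (\<forall>a\<in>players V E. B a = a) \<and>
     (\<forall>x\<in>matches V E. B x \<in> B ` in_nbrs E x)"

definition brackets :: "'v set \<Rightarrow> ('v \<times> 'v) set \<Rightarrow> ('v \<Rightarrow> 'v) set" where
  "brackets V E = {B. bracket V E B}"

definition scoring_system :: "'v set \<Rightarrow> ('v \<times> 'v) set \<Rightarrow> ('v \<Rightarrow> real) \<Rightarrow> bool" where
  "scoring_system V E \<sigma> \<longleftrightarrow> (\<forall>x\<in>matches V E. \<sigma> x > 0)"

definition score :: "'v set \<Rightarrow> ('v \<times> 'v) set \<Rightarrow> ('v \<Rightarrow> real) \<Rightarrow> ('v \<Rightarrow> 'v) \<Rightarrow> ('v \<Rightarrow> 'v) \<Rightarrow> real" where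
  "score V E \<sigma> B B' = (\<Sum>x\<in>{x\<in>matches V E. B x = B' x}. \<sigma> x)"

definition resolving :: "'v set \<Rightarrow> ('v \<times> 'v) set \<Rightarrow> ('v \<Rightarrow> real) \<Rightarrow> ('v \<Rightarrow> 'v) set \<Rightarrow> bool" where
  "resolving V E \<sigma> S \<longleftrightarrow>
     (\<forall>B\<in>brackets V E. \<forall>B'\<in>brackets V E. B \<noteq> B' \<longrightarrow>
        (\<exists>Bi\<in>S. score V E \<sigma> Bi B \<noteq> score V E \<sigma> Bi B'))"

definition res :: "'v set \<Rightarrow> ('v \<times> 'v) set \<Rightarrow> ('v \<Rightarrow> real) \<Rightarrow> nat" where
  "res V E \<sigma> = (LEAST r. \<forall>S. S \<subseteq> brackets V E \<longrightarrow> card S = r \<longrightarrow> resolving V E \<sigma> S)"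

end

theory Submission
  imports Defs "HOL-Library.FuncSet"
begin

context
  fixes V :: "'v set" and E :: "('v \<times> 'v) set" and s :: 'v
  assumes T: "single_elim_tournament V E" and S: "is_sink V E s"
begin

lemma finV: "finite V" using T by (simp add: single_elim_tournament_def)
lemma subE: "E \<subseteq> V \<times> V" using T by (simp add: single_elim_tournament_def)
lemma acyc: "acyclic E" using T by (simp add: single_elim_tournament_def)
lemma finE: "finite E" using finV subE finite_subset by blast
lemma wfE: "wf E" using finE acyc finite_acyclic_wf by blast
lemma wfC: "wf (E\<inverse>)" using finE acyc finite_acyclic_wf_converse by blast
lemma sV: "s \<in> V" using S by (simp add: is_sink_def)
lemma s_out: "(s, y) \<notin> E" using S by (simp add: is_sink_def out_nbrs_def)
lemma uniq_sink: "is_sink V E v \<Longrightarrow> v = s"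
  using T S by (auto simp: single_elim_tournament_def)
lemma irr: "(x, x) \<notin> E" using acyc by (meson acyclic_def r_into_trancl')

lemma sv: "single_valued E"
proof (rule single_valuedI)
  fix x y z assume xy: "(x, y) \<in> E" and xz: "(x, z) \<in> E"
  have xV: "x \<in> V" using xy subE by auto
  have ns: "\<not> is_sink V E x" using xy by (auto simp: is_sink_def out_nbrs_def)
  have "card (out_nbrs E x) = 1" using T xV ns by (simp add: single_elim_tournament_def)
  then obtain w where "out_nbrs E x = {w}" using card_1_singletonE by blast
  moreover have "y \<in> out_nbrs E x" "z \<in> out_nbrs E x" using xy xz by (auto simp: out_nbrs_def)
  ultimately show "y = z" by simp
qed

lemma reach_s: "v \<in> V \<Longrightarrow> (v, s) \<in> E\<^sup>*"
proof (rule ccontr)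
  assume vV: "v \<in> V" and nr: "(v, s) \<notin> E\<^sup>*"
  let ?Q = "{w. (v, w) \<in> E\<^sup>*}"
  have "v \<in> ?Q" by simp
  then obtain z where zQ: "z \<in> ?Q" and mn: "\<forall>y. (y, z) \<in> E\<inverse> \<longrightarrow> y \<notin> ?Q"
    using wfC wf_eq_minimal by metis
  have zV: "z \<in> V" using zQ vV subE by (auto elim: rtranclE)
  have "z \<noteq> s" using zQ nr by auto
  hence "\<not> is_sink V E z" using uniq_sink by blast
  then obtain y where "(z, y) \<in> E" using zV by (auto simp: is_sink_def out_nbrs_def)
  moreover have "(v, y) \<in> E\<^sup>*" using zQ calculation by auto
  ultimately show False using mn by auto
qed

lemma player_below: "v \<in> V \<Longrightarrow> \<exists>p\<in>players V E. (p, v) \<in> E\<^sup>*"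
proof -
  assume vV: "v \<in> V"
  let ?Q = "{w. (w, v) \<in> E\<^sup>*}"
  have "v \<in> ?Q" by simp
  then obtain z where zQ: "z \<in> ?Q" and mn: "\<forall>y. (y, z) \<in> E \<longrightarrow> y \<notin> ?Q"
    using wfE wf_eq_minimal by metis
  have zV: "z \<in> V" using zQ vV subE by (auto elim: converse_rtranclE)
  have "in_nbrs E z = {}"
    using mn zQ by (auto simp: in_nbrs_def intro: converse_rtrancl_into_rtrancl)
  then show ?thesis using zV zQ by (auto simp: players_def)
qed

lemma sep:
  assumes "(u, z) \<in> E" "(u', z) \<in> E" "(p, u) \<in> E\<^sup>*" "(p, u') \<in> E\<^sup>*"
  shows "u = u'"
proof (rule ccontr)
  assume ne: "u \<noteq> u'"
  have c: "(u, u') \<in> E\<^sup>* \<or> (u', u) \<in> E\<^sup>*" using single_valued_confluent[OF sv assms(3,4)] .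
  have key: "\<And>a b. (a, z) \<in> E \<Longrightarrow> (b, z) \<in> E \<Longrightarrow> a \<noteq> b \<Longrightarrow> (a, b) \<in> E\<^sup>* \<Longrightarrow> False"
  proof -
    fix a b assume az: "(a, z) \<in> E" and bz: "(b, z) \<in> E" and ab: "a \<noteq> b" and r: "(a, b) \<in> E\<^sup>*"
    from r ab obtain c where ac: "(a, c) \<in> E" and cb: "(c, b) \<in> E\<^sup>*"
      by (auto elim: converse_rtranclE)
    have "c = z" using sv ac az by (auto simp: single_valued_def)
    hence "(z, z) \<in> E\<^sup>+" using cb bz by auto
    thus False using acyc by (simp add: acyclic_def)
  qed
  show False using c key assms(1,2) ne by metis
qed

lemma player_only: "a \<in> players V E \<Longrightarrow> (p, a) \<in> E\<^sup>* \<Longrightarrow> p = a"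
  by (auto simp: players_def in_nbrs_def elim: rtranclE)

lemma bracket_reach:
  assumes B: "bracket V E B"
  shows "x \<in> V \<Longrightarrow> (B x, x) \<in> E\<^sup>*"
proof (induction x rule: wf_induct[OF wfE])
  case (1 x)
  show ?case
  proof (cases "x \<in> players V E")
    case True thus ?thesis using B by (simp add: bracket_def)
  next
    case False
    hence "x \<in> matches V E" using 1 by (simp add: matches_def)
    then obtain u where u: "u \<in> in_nbrs E x" "B x = B u" using B by (auto simp: bracket_def)
    have ux: "(u, x) \<in> E" using u by (simp add: in_nbrs_def)
    hence "u \<in> V" using subE by auto
    hence "(B u, u) \<in> E\<^sup>*" using 1 ux by auto
    thus ?thesis using u ux by auto
  qed
qed

lemma players_sub: "players V E \<subseteq> V" by (auto simp: players_def)
lemma in_fin: "finite (in_nbrs E x)"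
proof -
  have "in_nbrs E x \<subseteq> V" using subE by (auto simp: in_nbrs_def)
  thus ?thesis using finV finite_subset by blast
qed

lemma s_match:
  assumes "card (players V E) \<ge> 2"
  shows "s \<in> matches V E"
proof (rule ccontr)
  assume "s \<notin> matches V E"
  hence sp: "s \<in> players V E" using sV by (simp add: matches_def)
  have "\<not> players V E \<subseteq> {s}"
  proof
    assume "players V E \<subseteq> {s}"
    hence "card (players V E) \<le> card {s}" by (intro card_mono) auto
    thus False using assms by simp
  qed
  then obtain p where pp: "p \<in> players V E" and ps: "p \<noteq> s" by auto
  have "(p, s) \<in> E\<^sup>*" using reach_s pp players_sub by auto
  then obtain y where "(y, s) \<in> E" using ps by (auto elim: rtranclE)
  thus False using sp by (auto simp: players_def in_nbrs_def)
qed

lemma match_indeg: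
  assumes "x \<in> matches V E"
  shows "card (in_nbrs E x) \<ge> 2"
proof -
  have xV: "x \<in> V" and ne: "in_nbrs E x \<noteq> {}" using assms by (auto simp: matches_def players_def)
  have "card (in_nbrs E x) \<noteq> 1" using T xV by (simp add: single_elim_tournament_def)
  moreover have "card (in_nbrs E x) \<noteq> 0" using ne in_fin by simp
  ultimately show ?thesis by linarith
qed

lemma match_two_players:
  assumes "x \<in> matches V E"
  shows "card {p\<in>players V E. (p, x) \<in> E\<^sup>*} \<ge> 2"
proof -
  have "card (in_nbrs E x) \<ge> 2" using match_indeg assms .
  hence c2: "card (in_nbrs E x) \<ge> 2" .
  then obtain w where w1: "w \<in> in_nbrs E x" by (metis card.empty ex_in_conv not_numeral_le_zero)
  have "in_nbrs E x \<noteq> {w}" using c2 by auto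
  then obtain w' where w2: "w' \<in> in_nbrs E x" "w \<noteq> w'" using w1 by blast
  have w: "w \<in> in_nbrs E x" "w' \<in> in_nbrs E x" "w \<noteq> w'" using w1 w2 by auto
  have wE: "(w, x) \<in> E" "(w', x) \<in> E" using w by (auto simp: in_nbrs_def)
  hence wV: "w \<in> V" "w' \<in> V" using subE by auto
  obtain q where q: "q \<in> players V E" "(q, w) \<in> E\<^sup>*" using player_below wV by blast
  obtain q' where q': "q' \<in> players V E" "(q', w') \<in> E\<^sup>*" using player_below wV by blast
  have "q \<noteq> q'" using sep[OF wE] q q' w(3) by blast
  moreover have "{q, q'} \<subseteq> {p\<in>players V E. (p, x) \<in> E\<^sup>*}" using q q' wE by auto
  moreover have "finite {p\<in>players V E. (p, x) \<in> E\<^sup>*}"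
    using finV players_sub finite_subset by (metis (no_types, lifting) mem_Collect_eq subsetI)
  ultimately show ?thesis by (metis card_2_iff card_mono)
qed

lemma bracket_upd:
  assumes B: "bracket V E B" and us: "(u', s) \<in> E"
  shows "bracket V E (B(s := B u'))"
proof -
  have u's: "u' \<noteq> s" using us irr by auto
  have u'V: "u' \<in> V" using us subE by auto
  have sm: "s \<notin> players V E" using us by (auto simp: players_def in_nbrs_def)
  have "B u' \<in> players V E" using B u'V by (simp add: bracket_def)
  moreover have "\<And>x. x \<in> matches V E \<Longrightarrow> x \<noteq> s \<Longrightarrow> (B(s := B u')) ` in_nbrs E x = B ` in_nbrs E x"
    using s_out by (auto simp: in_nbrs_def)
  moreover have "B u' \<in> (B(s := B u')) ` in_nbrs E s" using us u's
    by (auto simp: in_nbrs_def image_iff intro!: bexI[of _ u'])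
  ultimately show ?thesis using B sV sm unfolding bracket_def
  proof (intro conjI ballI allI impI)
    fix x assume xm: "x \<in> matches V E"
    show "(B(s := B u')) x \<in> (B(s := B u')) ` in_nbrs E x"
    proof (cases "x = s")
      case True thus ?thesis using \<open>B u' \<in> (B(s := B u')) ` in_nbrs E s\<close> by simp
    next
      case False
      hence "(B(s := B u')) ` in_nbrs E x = B ` in_nbrs E x"
        using \<open>\<And>x. x \<in> matches V E \<Longrightarrow> x \<noteq> s \<Longrightarrow> (B(s := B u')) ` in_nbrs E x = B ` in_nbrs E x\<close> xm by blast
      thus ?thesis using B xm False by (simp add: bracket_def)
    qed
  qed auto
qed

definition bmin :: "('v \<Rightarrow> nat) \<Rightarrow> 'v \<Rightarrow> 'v" where
  "bmin f x = (if x \<in> V then arg_min f (\<lambda>p. p \<in> players V E \<and> (p, x) \<in> E\<^sup>*) else undefined)"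

lemma bmin_prop:
  assumes "x \<in> V"
  shows "bmin f x \<in> players V E \<and> (bmin f x, x) \<in> E\<^sup>* \<and>
    (\<forall>q. q \<in> players V E \<and> (q, x) \<in> E\<^sup>* \<longrightarrow> f (bmin f x) \<le> f q)"
proof -
  obtain p where "p \<in> players V E" "(p, x) \<in> E\<^sup>*" using player_below assms by blast
  then show ?thesis using arg_min_nat_lemma[of "\<lambda>p. p \<in> players V E \<and> (p, x) \<in> E\<^sup>*" p f] assms
    by (simp add: bmin_def)
qed

lemma bmin_bracket:
  assumes inj: "inj_on f V"
  shows "bracket V E (bmin f)"
  unfolding bracket_def
proof (intro conjI ballI allI impI)
  fix x assume "x \<notin> V" thus "bmin f x = undefined" by (simp add: bmin_def)
next
  fix x assume "x \<in> V" thus "bmin f x \<in> players V E" using bmin_prop by blast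
next
  fix a assume a: "a \<in> players V E"
  hence "a \<in> V" using players_sub by auto
  thus "bmin f a = a" using bmin_prop player_only a by blast
next
  fix x assume xm: "x \<in> matches V E"
  hence xV: "x \<in> V" and xnp: "x \<notin> players V E" by (auto simp: matches_def)
  let ?q = "bmin f x"
  have q: "?q \<in> players V E" "(?q, x) \<in> E\<^sup>*"
    "\<forall>q. q \<in> players V E \<and> (q, x) \<in> E\<^sup>* \<longrightarrow> f ?q \<le> f q" using bmin_prop xV by auto
  have "?q \<noteq> x" using q xnp by auto
  then obtain u where qu: "(?q, u) \<in> E\<^sup>*" and ux: "(u, x) \<in> E" using q(2) by (auto elim: rtranclE)
  have uV: "u \<in> V" using ux subE by auto
  let ?q' = "bmin f u"
  have q': "?q' \<in> players V E" "(?q', u) \<in> E\<^sup>*"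
    "\<forall>q. q \<in> players V E \<and> (q, u) \<in> E\<^sup>* \<longrightarrow> f ?q' \<le> f q" using bmin_prop uV by auto
  have "f ?q' \<le> f ?q" using q' q qu by blast
  moreover have "f ?q \<le> f ?q'" using q q' ux by (meson rtrancl.rtrancl_into_rtrancl)
  ultimately have "f ?q = f ?q'" by simp
  hence "?q = ?q'" using inj q(1) q'(1) players_sub by (meson inj_on_def subsetD)
  thus "bmin f x \<in> bmin f ` in_nbrs E x" using ux by (auto simp: in_nbrs_def)
qed

lemma fin_brackets: "finite (brackets V E)"
proof -
  have "brackets V E \<subseteq> Pi\<^sub>E V (\<lambda>_. V)"
    using players_sub by (auto simp: brackets_def bracket_def PiE_def extensional_def Pi_def)
  thus ?thesis using finV finite_PiE finite_subset by (metis)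
qed

definition CC :: "'v \<Rightarrow> ('v \<Rightarrow> 'v) set" where
  "CC u = {B\<in>brackets V E. B s = B u}"
definition AA :: "'v \<Rightarrow> ('v \<Rightarrow> 'v) set" where
  "AA p = {B\<in>brackets V E. B s = p}"
definition PP :: "'v \<Rightarrow> 'v set" where
  "PP u = {p\<in>players V E. (p, u) \<in> E\<^sup>*}"

lemma cover:
  assumes sm: "s \<in> matches V E" and B: "B \<in> brackets V E"
  shows "\<exists>u\<in>in_nbrs E s. B s = B u"
  using assms by (auto simp: brackets_def bracket_def)

lemma C_disj:
  assumes "u \<in> in_nbrs E s" "u' \<in> in_nbrs E s" "B \<in> CC u" "B \<in> CC u'"
  shows "u = u'"
proof -
  have E: "(u, s) \<in> E" "(u', s) \<in> E" using assms by (auto simp: in_nbrs_def)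
  hence "u \<in> V" "u' \<in> V" using subE by auto
  moreover have b: "bracket V E B" using assms by (simp add: CC_def brackets_def)
  ultimately have "(B u, u) \<in> E\<^sup>*" "(B u', u') \<in> E\<^sup>*" using bracket_reach by auto
  moreover have "B u = B u'" using assms by (simp add: CC_def)
  ultimately show ?thesis using sep[OF E] by auto
qed

lemma C_le:
  assumes u: "u \<in> in_nbrs E s" and u': "u' \<in> in_nbrs E s"
  shows "card (CC u) \<le> card (CC u')"
proof -
  have us: "(u', s) \<in> E" "(u, s) \<in> E" using u u' by (auto simp: in_nbrs_def)
  have u's: "u' \<noteq> s" "u \<noteq> s" using us irr by auto
  let ?g = "\<lambda>B. B(s := B u')"
  have "inj_on ?g (CC u)"
  proof (rule inj_onI)
    fix B1 B2 assume b1: "B1 \<in> CC u" and b2: "B2 \<in> CC u" and eq: "?g B1 = ?g B2"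
    have "\<And>x. x \<noteq> s \<Longrightarrow> B1 x = B2 x" using eq by (metis fun_upd_other)
    moreover have "B1 s = B2 s" using b1 b2 u's calculation by (simp add: CC_def)
    ultimately show "B1 = B2" by (metis ext)
  qed
  moreover have "?g ` CC u \<subseteq> CC u'"
    using bracket_upd us u's by (auto simp: CC_def brackets_def)
  moreover have "finite (CC u')" using fin_brackets by (simp add: CC_def)
  ultimately show ?thesis using card_inj_on_le by blast
qed

lemma C_card:
  assumes sm: "s \<in> matches V E" and u: "u \<in> in_nbrs E s"
  shows "card (brackets V E) = card (in_nbrs E s) * card (CC u)"
proof -
  have "brackets V E = (\<Union>v\<in>in_nbrs E s. CC v)"
    using cover[OF sm] by (auto simp: CC_def)
  note Ueq = this
  have "card (brackets V E) = (\<Sum>v\<in>in_nbrs E s. card (CC v))"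
  proof -
    have disj: "\<forall>v\<in>in_nbrs E s. \<forall>w\<in>in_nbrs E s. v \<noteq> w \<longrightarrow> CC v \<inter> CC w = {}"
      using C_disj by blast
    have fin: "\<forall>v\<in>in_nbrs E s. finite (CC v)"
      using fin_brackets unfolding CC_def by simp
    show ?thesis using card_UN_disjoint[OF in_fin fin disj] Ueq by simp
  qed
  also have "\<dots> = (\<Sum>v\<in>in_nbrs E s. card (CC u))"
    using C_le u by (intro sum.cong) (auto intro: antisym)
  finally show ?thesis by simp
qed

lemma C_union:
  assumes sm: "s \<in> matches V E" and u: "u \<in> in_nbrs E s"
  shows "CC u = (\<Union>p\<in>PP u. AA p)"
proof
  show "CC u \<subseteq> (\<Union>p\<in>PP u. AA p)"
  proof
    fix B assume B: "B \<in> CC u"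
    have "u \<in> V" using u subE by (auto simp: in_nbrs_def)
    hence "B u \<in> PP u" using B bracket_reach by (auto simp: CC_def PP_def brackets_def bracket_def)
    thus "B \<in> (\<Union>p\<in>PP u. AA p)" using B by (auto simp: CC_def AA_def)
  qed
next
  show "(\<Union>p\<in>PP u. AA p) \<subseteq> CC u"
  proof
    fix B assume "B \<in> (\<Union>p\<in>PP u. AA p)"
    then obtain p where p: "p \<in> PP u" "B \<in> AA p" by auto
    obtain u' where u': "u' \<in> in_nbrs E s" "B s = B u'" using cover[OF sm] p by (auto simp: AA_def)
    have "u' \<in> V" using u' subE by (auto simp: in_nbrs_def)
    hence "(B u', u') \<in> E\<^sup>*" using p bracket_reach by (auto simp: AA_def brackets_def)
    hence "u' = u" using sep[of u' s u p] u u' p by (auto simp: in_nbrs_def AA_def PP_def)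
    thus "B \<in> CC u" using p u' by (auto simp: CC_def AA_def)
  qed
qed

lemma A_min:
  assumes sm: "s \<in> matches V E" and u: "u \<in> in_nbrs E s"
  shows "\<exists>p\<in>PP u. card (PP u) * card (AA p) \<le> card (CC u)"
proof -
  have uV: "u \<in> V" using u subE by (auto simp: in_nbrs_def)
  obtain p0 where "p0 \<in> PP u" using player_below[OF uV] by (auto simp: PP_def)
  then obtain p where p: "p \<in> PP u" and mn: "\<forall>q. q \<in> PP u \<longrightarrow> card (AA p) \<le> card (AA q)"
    using ex_has_least_nat[of "\<lambda>q. q \<in> PP u" p0 "\<lambda>q. card (AA q)"] by blast
  have finP: "finite (PP u)" using finV players_sub finite_subset
    by (metis (no_types, lifting) PP_def mem_Collect_eq subsetI)
  have "card (CC u) = (\<Sum>q\<in>PP u. card (AA q))"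
    unfolding C_union[OF sm u]
    by (rule card_UN_disjoint) (use finP fin_brackets in \<open>auto simp: AA_def\<close>)
  also have "\<dots> \<ge> card (PP u) * card (AA p)"
    using sum_bounded_below[of "PP u" "card (AA p)" "\<lambda>q. card (AA q)"] mn by simp
  finally show ?thesis using p by auto
qed

lemma PP_card_pos: "u \<in> V \<Longrightarrow> card (PP u) \<ge> 1"
proof -
  assume uV: "u \<in> V"
  have "PP u \<subseteq> V" using players_sub by (auto simp: PP_def)
  hence finP: "finite (PP u)" using finV finite_subset by blast
  obtain p0 where "p0 \<in> PP u" using player_below[OF uV] by (auto simp: PP_def)
  hence "card (PP u) > 0" using finP card_gt_0_iff by blast
  thus ?thesis by simp
qed

lemma main_ctx:
  assumes P2: "card (players V E) \<ge> 2"
  shows "real r \<le> real (card (brackets V E)) / 4 \<Longrightarrow>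
     \<exists>S\<subseteq>brackets V E. card S = r \<and> \<not> resolving V E \<sigma> S"
proof -
  assume rle: "real r \<le> real (card (brackets V E)) / 4"
  define I where "I = in_nbrs E s"
  define N where "N = card (brackets V E)"
  have sm: "s \<in> matches V E" using s_match P2 .
  have k2: "card I \<ge> 2" using match_indeg sm I_def by simp
  have finI: "finite I" using in_fin I_def by simp
  have "I \<noteq> {}" using k2 by auto
  then obtain a where a: "a \<in> I" by blast
  have "I \<noteq> {a}" using k2 by auto
  then obtain b where b: "b \<in> I" "a \<noteq> b" using a by blast
  have IV: "I \<subseteq> V" using subE I_def by (auto simp: in_nbrs_def)
  obtain u1 u2 where u: "u1 \<in> I" "u2 \<in> I" "u1 \<noteq> u2"
    and cs: "card I \<ge> 3 \<or> u2 \<in> matches V E \<or> (I = {u1, u2} \<and> u1 \<in> players V E \<and> u2 \<in> players V E)"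
  proof (cases "card I \<ge> 3")
    case True thus ?thesis using that a b by blast
  next
    case False
    hence "card I = 2" using k2 by simp
    moreover have "card {a, b} = 2" using b(2) by simp
    moreover have "{a, b} \<subseteq> I" using a b by simp
    ultimately have Iab: "I = {a, b}" using card_subset_eq[OF finI] by metis
    show ?thesis
    proof (cases "a \<in> matches V E")
      case True thus ?thesis using that a b by blast
    next
      case na: False
      show ?thesis
      proof (cases "b \<in> matches V E")
        case True thus ?thesis using that a b by blast
      next
        case False
        have "a \<in> V" "b \<in> V" using a b IV by auto
        hence "a \<in> players V E" "b \<in> players V E" using na False by (auto simp: matches_def)
        thus ?thesis using that[of a b] a b Iab by blast
      qed
    qed
  qed
  have uE: "(u1, s) \<in> E" "(u2, s) \<in> E" using u I_def by (auto simp: in_nbrs_def)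
  have uV: "u1 \<in> V" "u2 \<in> V" using u IV by auto
  have NC1: "N = card I * card (CC u1)" using C_card[OF sm, of u1] u(1) unfolding I_def N_def by blast
  have NC2: "N = card I * card (CC u2)" using C_card[OF sm, of u2] u(2) unfolding I_def N_def by blast
  obtain p1 where p1: "p1 \<in> PP u1" "card (PP u1) * card (AA p1) \<le> card (CC u1)"
    using A_min[OF sm] u I_def by blast
  obtain p2 where p2: "p2 \<in> PP u2" "card (PP u2) * card (AA p2) \<le> card (CC u2)"
    using A_min[OF sm] u I_def by blast
  have m1: "card (PP u1) \<ge> 1" "card (PP u2) \<ge> 1" using PP_card_pos uV by auto
  have p12: "p1 \<noteq> p2"
    using sep[OF uE] p1 p2 u by (auto simp: PP_def)
  have p1V: "p1 \<in> V" and p2V: "p2 \<in> V" using p1 p2 players_sub by (auto simp: PP_def)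
  obtain g :: "'v \<Rightarrow> nat" where g: "inj_on g V" using finV finite_imp_inj_to_nat_seg by blast
  define f where "f x = (if x = p1 then 0 else if x = p2 then 1 else g x + 2)" for x
  have finj: "inj_on f V"
    using g p12 unfolding f_def inj_on_def by auto
  define B where "B = bmin f"
  have Bb: "bracket V E B" using bmin_bracket[OF finj] B_def by simp
  have p1s: "(p1, s) \<in> E\<^sup>*" using p1 uE by (auto simp: PP_def)
  have Bs: "B s = p1"
  proof -
    have "f (B s) \<le> f p1" using bmin_prop[OF sV] p1s p1 B_def by (auto simp: PP_def)
    thus ?thesis by (auto simp: f_def split: if_splits)
  qed
  have Bu2: "B u2 = p2"
  proof -
    have pr: "B u2 \<in> players V E" "(B u2, u2) \<in> E\<^sup>*" using bmin_prop[OF uV(2)] B_def by auto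
    have "f (B u2) \<le> f p2" using bmin_prop[OF uV(2)] p2 B_def by (auto simp: PP_def)
    moreover have "B u2 \<noteq> p1" using sep[OF uE] p1 pr u by (auto simp: PP_def)
    ultimately show ?thesis using p12 by (auto simp: f_def split: if_splits)
  qed
  define B' where "B' = B(s := B u2)"
  have B'b: "bracket V E B'" using bracket_upd[OF Bb uE(2)] B'_def by simp
  have B's: "B' s = p2" using B'_def Bu2 by simp
  have BB: "B \<noteq> B'" using Bs B's p12 by auto
  define S0 where "S0 = brackets V E - (AA p1 \<union> AA p2)"
  have nonres: "\<And>S. S \<subseteq> S0 \<Longrightarrow> \<not> resolving V E \<sigma> S"
  proof -
    fix S assume SS: "S \<subseteq> S0"
    have "\<forall>Bi\<in>S. score V E \<sigma> Bi B = score V E \<sigma> Bi B'"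
    proof
      fix Bi assume "Bi \<in> S"
      hence "Bi s \<noteq> p1" "Bi s \<noteq> p2" using SS by (auto simp: S0_def AA_def)
      hence "{x\<in>matches V E. Bi x = B x} = {x\<in>matches V E. Bi x = B' x}"
        using Bs B's unfolding B'_def by auto
      thus "score V E \<sigma> Bi B = score V E \<sigma> Bi B'" by (simp add: score_def)
    qed
    thus "\<not> resolving V E \<sigma> S" using Bb B'b BB unfolding resolving_def brackets_def by auto
  qed
  have finBr: "finite (brackets V E)" using fin_brackets .
  have cS0: "card S0 + card (AA p1) + card (AA p2) \<ge> N"
  proof -
    have sub: "AA p1 \<union> AA p2 \<subseteq> brackets V E" by (auto simp: AA_def)
    have finX: "finite (AA p1 \<union> AA p2)" using finite_subset[OF sub finBr] .
    have "card S0 = N - card (AA p1 \<union> AA p2)" unfolding S0_def N_def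
      using card_Diff_subset[OF finX sub] .
    moreover have "card (AA p1 \<union> AA p2) \<le> card (AA p1) + card (AA p2)" by (rule card_Un_le)
    ultimately show ?thesis by linarith
  qed
  have "r \<le> card S0"
  proof (cases "I = {u1, u2} \<and> u1 \<in> players V E \<and> u2 \<in> players V E")
    case deg: True
    have VV: "V \<subseteq> {s, u1, u2}"
    proof
      fix v assume vV: "v \<in> V"
      show "v \<in> {s, u1, u2}"
      proof (cases "v = s")
        case True thus ?thesis by simp
      next
        case vs: False
        have "(v, s) \<in> E\<^sup>*" using reach_s vV .
        then obtain y where vy: "(v, y) \<in> E\<^sup>*" and ys: "(y, s) \<in> E" using vs by (auto elim: rtranclE)
        have "y \<in> I" using ys I_def by (simp add: in_nbrs_def)
        hence "y = u1 \<or> y = u2" using deg by blast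
        hence "v = u1 \<or> v = u2" using vy deg player_only by blast
        thus ?thesis by blast
      qed
    qed
    have "inj_on (\<lambda>B. B s) (brackets V E)"
    proof (rule inj_onI)
      fix X Y assume X: "X \<in> brackets V E" and Y: "Y \<in> brackets V E" and eq: "X s = Y s"
      show "X = Y"
      proof
        fix x show "X x = Y x"
          using X Y eq VV deg unfolding brackets_def bracket_def
          by (cases "x \<in> V") auto
      qed
    qed
    moreover have "(\<lambda>B. B s) ` brackets V E \<subseteq> {u1, u2}"
    proof
      fix z assume "z \<in> (\<lambda>B. B s) ` brackets V E"
      then obtain X where "X \<in> brackets V E" "z = X s" by auto
      hence "z \<in> players V E" using sV by (auto simp: brackets_def bracket_def)
      moreover have "s \<notin> players V E" using sm by (simp add: matches_def)
      ultimately show "z \<in> {u1, u2}" using VV players_sub by auto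
    qed
    ultimately have "N \<le> card {u1, u2}" unfolding N_def
      using card_inj_on_le[of "\<lambda>B. B s" "brackets V E" "{u1, u2}"] by simp
    hence "N \<le> 2" using u(3) by simp
    hence "real N \<le> 2" by simp
    hence "real r < 1" using rle unfolding N_def by linarith
    hence "r = 0" by simp
    thus ?thesis by simp
  next
    case False
    hence cs': "card I \<ge> 3 \<or> u2 \<in> matches V E" using cs by blast
    have ceq: "card (CC u2) = card (CC u1)" using NC1 NC2 k2 by simp
    have a1: "card (AA p1) \<le> card (CC u1)"
      using mult_le_mono1[OF m1(1), of "card (AA p1)"] p1(2) by linarith
    have a2: "card (AA p2) \<le> card (CC u1)"
      using mult_le_mono1[OF m1(2), of "card (AA p2)"] p2(2) ceq by linarith
    have "4 * card (AA p1) + 4 * card (AA p2) \<le> 3 * N"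
    proof (cases "card I \<ge> 3")
      case True
      have "3 * card (CC u1) \<le> N" using NC1 mult_le_mono1[OF True, of "card (CC u1)"] by simp
      thus ?thesis using a1 a2 by linarith
    next
      case False
      hence um: "u2 \<in> matches V E" using cs' by blast
      have "card (PP u2) \<ge> 2" using match_two_players[OF um] by (simp add: PP_def)
      hence "2 * card (AA p2) \<le> card (CC u2)"
        using mult_le_mono1[of 2 "card (PP u2)" "card (AA p2)"] p2(2) by linarith
      moreover have "2 * card (CC u1) \<le> N" using NC1 mult_le_mono1[OF k2, of "card (CC u1)"] by simp
      ultimately show ?thesis using a1 ceq by linarith
    qed
    hence "N \<le> 4 * card S0" using cS0 by linarith
    hence "real N \<le> 4 * real (card S0)" by simp
    hence "real r \<le> real (card S0)" using rle unfolding N_def by linarith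
    thus ?thesis by simp
  qed
  then obtain S where "S \<subseteq> S0" "card S = r" by (rule obtain_subset_with_card_n)
  moreover have "S0 \<subseteq> brackets V E" by (auto simp: S0_def)
  ultimately show ?thesis using nonres by blast
qed

end

theorem corollaryA3:
  fixes V :: "'v set" and E :: "('v \<times> 'v) set" and \<sigma> :: "'v \<Rightarrow> real"
  assumes "single_elim_tournament V E"
    and "card (players V E) \<ge> 2"
    and "scoring_system V E \<sigma>"
  shows "real (res V E \<sigma>) > real (card (brackets V E)) / 4"
proof -
  have "\<exists>!v. is_sink V E v" using assms(1) unfolding single_elim_tournament_def by blast
  then obtain s where S: "is_sink V E s" by blast
  let ?P = "\<lambda>r. \<forall>S. S \<subseteq> brackets V E \<longrightarrow> card S = r \<longrightarrow> resolving V E \<sigma> S"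
  have fin: "finite (brackets V E)" using fin_brackets[OF assms(1) S] .
  have "?P (Suc (card (brackets V E)))"
  proof (intro allI impI)
    fix S assume SB: "S \<subseteq> brackets V E" and cS: "card S = Suc (card (brackets V E))"
    have "card S \<le> card (brackets V E)" using card_mono[OF fin SB] .
    hence False using cS by simp
    thus "resolving V E \<sigma> S" ..
  qed
  hence "?P (res V E \<sigma>)" unfolding res_def by (rule LeastI)
  show ?thesis
  proof (rule ccontr)
    assume "\<not> ?thesis"
    hence "real (res V E \<sigma>) \<le> real (card (brackets V E)) / 4" by simp
    then obtain S where "S \<subseteq> brackets V E" "card S = res V E \<sigma>" "\<not> resolving V E \<sigma> S"
      using main_ctx[OF assms(1) S assms(2)] by blast
    thus False using \<open>?P (res V E \<sigma>)\<close> by blast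
  qed
qed

end
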